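(* Let $\mathbf{x}$ be a feasible solution of $\textsc{Node-MC-Rel}$. Choose $\ell$ uniformly at random from $\{1,\dots,k\}$ and, independently, $\theta$ uniformly at random from $(0,1/2)$, and let $C=C(\ell,\theta)=\bigcup_{i\neq\ell}B^+(s_i,\theta)$. Then for every $v\in V$, $\Pr[v\in C]\le 2(1-1/k)\,x_v$.
   Context: $G=(V,E)$ is an undirected graph with non-negative node weights $w_v$ and terminal set $S=\{s_1,\dots,s_k\}$, $k\ge2$, forming an independent set. For $i<j$, $\mathcal{P}_{ij}$ is the set of paths between $s_i$ and $s_j$. $\textsc{Node-MC-Rel}$: minimize $\sum_{v\in V\setminus S}w_vx_v$ s.t. $\sum_{v\in p}x_v\ge1$ for all $p\in\mathcal{P}_{ij}$, $i<j$ (sum over all vertices of $p$ including endpoints), $x_v=0$ for $v\in S$, $x\ge0$. $d(a,b)$ is the minimum over paths from $a$ to $b$ of the sum of $x$ over all vertices of the path including both endpoints. $B(u,r)=\{v:d(u,v)\le r\}$; $B^+(u,r)$ is the set of nodes not in $B(u,r)$ adjacent to some node of $B(u,r)$. *)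

theory Defs
  imports "HOL-Probability.Probability"
begin

text \<open>Undirected graph on a finite vertex set V with symmetric, irreflexive edge relation E.\<close>

definition is_path :: "'a set \<Rightarrow> ('a \<Rightarrow> 'a \<Rightarrow> bool) \<Rightarrow> 'a list \<Rightarrow> 'a \<Rightarrow> 'a \<Rightarrow> bool" where
  "is_path V E p a b \<longleftrightarrow> p \<noteq> [] \<and> hd p = a \<and> last p = b \<and> set p \<subseteq> V \<and> distinct p \<and>
     (\<forall>i. Suc i < length p \<longrightarrow> E (p ! i) (p ! Suc i))"

definition path_len :: "('a \<Rightarrow> real) \<Rightarrow> 'a list \<Rightarrow> real" where
  "path_len x p = sum_list (map x p)"

text \<open>d(a,b): minimum over paths (infinite if no path exists).\<close>
definition node_dist :: "'a set \<Rightarrow> ('a \<Rightarrow> 'a \<Rightarrow> bool) \<Rightarrow> ('a \<Rightarrow> real) \<Rightarrow> 'a \<Rightarrow> 'a \<Rightarrow> ereal" where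
  "node_dist V E x a b = Inf {ereal (path_len x p) | p. is_path V E p a b}"

definition ball_nd :: "'a set \<Rightarrow> ('a \<Rightarrow> 'a \<Rightarrow> bool) \<Rightarrow> ('a \<Rightarrow> real) \<Rightarrow> 'a \<Rightarrow> real \<Rightarrow> 'a set" where
  "ball_nd V E x u r = {v \<in> V. node_dist V E x u v \<le> ereal r}"

definition ball_bdry :: "'a set \<Rightarrow> ('a \<Rightarrow> 'a \<Rightarrow> bool) \<Rightarrow> ('a \<Rightarrow> real) \<Rightarrow> 'a \<Rightarrow> real \<Rightarrow> 'a set" where
  "ball_bdry V E x u r = {w \<in> V. w \<notin> ball_nd V E x u r \<and> (\<exists>v \<in> ball_nd V E x u r. E v w)}"

definition node_mc_feasible :: "'a set \<Rightarrow> ('a \<Rightarrow> 'a \<Rightarrow> bool) \<Rightarrow> nat \<Rightarrow> (nat \<Rightarrow> 'a) \<Rightarrow> ('a \<Rightarrow> real) \<Rightarrow> bool" where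
  "node_mc_feasible V E k s x \<longleftrightarrow>
     (\<forall>i\<in>{1..k}. \<forall>j\<in>{1..k}. i < j \<longrightarrow> (\<forall>p. is_path V E p (s i) (s j) \<longrightarrow> path_len x p \<ge> 1)) \<and>
     (\<forall>i\<in>{1..k}. x (s i) = 0) \<and>
     (\<forall>v\<in>V. x v \<ge> 0)"

definition cut_set :: "'a set \<Rightarrow> ('a \<Rightarrow> 'a \<Rightarrow> bool) \<Rightarrow> nat \<Rightarrow> (nat \<Rightarrow> 'a) \<Rightarrow> ('a \<Rightarrow> real) \<Rightarrow> nat \<Rightarrow> real \<Rightarrow> 'a set" where
  "cut_set V E k s x l \<theta> = (\<Union>i\<in>{1..k} - {l}. ball_bdry V E x (s i) \<theta>)"

end

theory Submission
  imports Defs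
begin


lemma measure_Icc_le:
  fixes p q :: real
  assumes "A \<subseteq> {p..q}" "A \<in> sets borel"
  shows "measure lborel A \<le> max 0 (q - p)"
proof (cases "p \<le> q")
  case True
  have "measure lborel A \<le> measure lborel {p..q}"
    by (rule measure_mono_fmeasurable) (use assms True in \<open>auto simp: fmeasurable_def emeasure_lborel_Icc_eq\<close>)
  then show ?thesis using True by simp
next
  case False
  then have "A = {}" using assms by auto
  then show ?thesis by simp
qed

lemma comb_part:
  fixes U :: "nat \<Rightarrow> real set" and k :: nat and x :: real
  assumes k2: "k \<ge> 2" and Ub: "\<And>i. U i \<in> sets borel" and x0: "x \<ge> 0"
    and P1: "\<And>i t t'. i \<in> {1..k} \<Longrightarrow> t \<in> U i \<inter> {0<..<1/2} \<Longrightarrow> t' \<in> U i \<inter> {0<..<1/2} \<Longrightarrow> t' < t + x"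
    and P2: "\<And>i j t t'. i \<in> {1..k} \<Longrightarrow> j \<in> {1..k} \<Longrightarrow> i \<noteq> j \<Longrightarrow> t \<in> U i \<inter> {0<..<1/2}
              \<Longrightarrow> t' \<in> U j \<inter> {0<..<1/2} \<Longrightarrow> 1 \<le> t + t' + x"
  shows "(\<Sum>l\<in>{1..k}. measure lborel {t\<in>{0<..<1/2}. \<exists>i\<in>{1..k}-{l}. t \<in> U i}) \<le> (real k - 1) * x"
proof -
  define T where "T i = U i \<inter> {0<..<1/2}" for i
  define A where "A l = {t\<in>{0<..<1/2}. \<exists>i\<in>{1..k}-{l}. t \<in> U i}" for l
  have Ab: "A l \<in> sets borel" for l
  proof -
    have "A l = {0<..<1/2} \<inter> (\<Union>i\<in>{1..k}-{l}. U i)" unfolding A_def by auto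
    then show ?thesis using Ub by auto
  qed
  define N where "N = {i\<in>{1..k}. T i \<noteq> {}}"
  show ?thesis
  proof (cases "N = {}")
    case True
    then have "A l = {}" for l unfolding A_def N_def T_def by blast
    then have "(\<Sum>l\<in>{1..k}. measure lborel (A l)) = 0" by simp
    then show ?thesis using k2 x0 unfolding A_def by simp
  next
    case False
    have fN: "finite N" unfolding N_def by auto
    have "Min ((\<lambda>i. Inf (T i)) ` N) \<in> (\<lambda>i. Inf (T i)) ` N"
      using fN False by (intro Min_in) auto
    then obtain f where fN': "f \<in> N" and fe: "Inf (T f) = Min ((\<lambda>i. Inf (T i)) ` N)" by auto
    have fmin: "Inf (T f) \<le> Inf (T i)" if "i \<in> N" for i
      unfolding fe using fN that by (intro Min_le) auto
    define a where "a = Inf (T f)"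
    have fk: "f \<in> {1..k}" and Tf: "T f \<noteq> {}" using fN' unfolding N_def by auto
    have bb: "bdd_below (T i)" for i unfolding T_def by (rule bdd_belowI[of _ 0]) auto
    have a1: "a \<le> t" if "i \<in> {1..k}" "t \<in> T i" for i t
    proof -
      have "i \<in> N" using that unfolding N_def by auto
      then have "a \<le> Inf (T i)" using fmin a_def by auto
      also have "Inf (T i) \<le> t" using cInf_lower[OF that(2) bb] .
      finally show ?thesis .
    qed
    have a2: "t \<le> a + x" if "t \<in> T f" for t
    proof -
      have "t - x \<le> a" unfolding a_def
        by (rule cInf_greatest[OF Tf]) (use P1[OF fk] that T_def in \<open>force\<close>)
      then show ?thesis by simp
    qed
    have a3: "1 - x - t \<le> a" if "j \<in> {1..k}" "j \<noteq> f" "t \<in> T j" for j t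
      unfolding a_def
      by (rule cInf_greatest[OF Tf]) (use P2[OF fk that(1)] that T_def in \<open>force\<close>)
    obtain t0 where t0: "t0 \<in> T f" using Tf by auto
    have a4: "a < 1/2" using a1[OF fk t0] t0 unfolding T_def by auto
    have Al: "A l \<subseteq> {a..a + min x (1/2 - a)}" if "l \<in> {1..k}" "l \<noteq> f" for l
    proof
      fix t assume "t \<in> A l"
      then obtain i where i: "i \<in> {1..k}" "i \<noteq> l" "t \<in> T i" unfolding A_def T_def by blast
      show "t \<in> {a..a + min x (1/2 - a)}"
      proof (cases "i = f")
        case True
        have "t \<le> a + x" using a2 i(3) True by auto
        then show ?thesis using a1[OF i(1) i(3)] i(3) unfolding T_def by auto
      next
        case False
        then show ?thesis using a1[OF i(1) i(3)] a3[OF i(1) False i(3)] i(3) unfolding T_def by auto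
      qed
    qed
    have Af: "A f \<subseteq> {1 - x - a..1/2}"
    proof
      fix t assume "t \<in> A f"
      then obtain i where i: "i \<in> {1..k}" "i \<noteq> f" "t \<in> T i" unfolding A_def T_def by blast
      then show "t \<in> {1 - x - a..1/2}" using a3[OF i] unfolding T_def by auto
    qed
    have mf: "measure lborel (A f) \<le> max 0 (x + a - 1/2)"
      using measure_Icc_le[OF Af Ab] by (simp add: algebra_simps)
    have ml: "measure lborel (A l) \<le> min x (1/2 - a)" if "l \<in> {1..k} - {f}" for l
      using measure_Icc_le[OF Al Ab, of l] that a4 x0 by auto
    have "(\<Sum>l\<in>{1..k}. measure lborel (A l)) = measure lborel (A f) + (\<Sum>l\<in>{1..k}-{f}. measure lborel (A l))"
      using fk by (simp add: sum.remove)
    also have "\<dots> \<le> max 0 (x + a - 1/2) + (\<Sum>l\<in>{1..k}-{f}. min x (1/2 - a))"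
      using mf ml by (intro add_mono sum_mono) auto
    also have "\<dots> = max 0 (x + a - 1/2) + (real k - 1) * min x (1/2 - a)"
      using fk by simp
    also have "\<dots> \<le> (real k - 1) * x"
    proof (cases "x \<le> 1/2 - a")
      case True then show ?thesis by simp
    next
      case False
      have "(real k - 2) * (1/2 - a) \<le> (real k - 2) * x"
        using False k2 by (intro mult_left_mono) auto
      then have h: "real k * (1/2 - a) - 2 * (1/2 - a) \<le> real k * x - 2 * x" by (simp add: algebra_simps)
      have e1: "max 0 (x + a - 1/2) = x + a - 1/2" "min x (1/2 - a) = 1/2 - a" using False by auto
      have "(real k - 1) * (1/2 - a) = real k * (1/2 - a) - 1 * (1/2 - a)"
        by (rule left_diff_distrib)
      moreover have "(real k - 1) * x = real k * x - x" by (simp add: left_diff_distrib)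
      ultimately show ?thesis unfolding e1 using h by (smt (verit) left_diff_distrib right_diff_distrib)
    qed
    finally show ?thesis unfolding A_def .
  qed
qed

lemma prob_part:
  fixes U :: "nat \<Rightarrow> real set" and k :: nat and x :: real
  assumes k2: "k \<ge> 2" and Ub: "\<And>i. U i \<in> sets borel" and x0: "x \<ge> 0"
    and P1: "\<And>i t t'. i \<in> {1..k} \<Longrightarrow> t \<in> U i \<inter> {0<..<1/2} \<Longrightarrow> t' \<in> U i \<inter> {0<..<1/2} \<Longrightarrow> t' < t + x"
    and P2: "\<And>i j t t'. i \<in> {1..k} \<Longrightarrow> j \<in> {1..k} \<Longrightarrow> i \<noteq> j \<Longrightarrow> t \<in> U i \<inter> {0<..<1/2}
              \<Longrightarrow> t' \<in> U j \<inter> {0<..<1/2} \<Longrightarrow> 1 \<le> t + t' + x"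
  shows "measure (measure_pmf (pmf_of_set {1..k}) \<Otimes>\<^sub>M uniform_measure lborel {0<..<1/2})
           {(l, t). \<exists>i\<in>{1..k}-{l}. t \<in> U i} \<le> 2 * (1 - 1 / real k) * x"
proof -
  define M2 where "M2 = uniform_measure lborel {0<..<1/2::real}"
  define S where "S = {(l::nat, t). \<exists>i\<in>{1..k}-{l}. t \<in> U i}"
  define A where "A l = {t\<in>{0<..<1/2}. \<exists>i\<in>{1..k}-{l}. t \<in> U i}" for l
  have Ab: "A l \<in> sets borel" for l
  proof -
    have "A l = {0<..<1/2} \<inter> (\<Union>i\<in>{1..k}-{l}. U i)" unfolding A_def by auto
    then show ?thesis using Ub by auto
  qed
  have ps: "prob_space M2" unfolding M2_def by (intro prob_space_uniform_measure) auto
  then interpret M2: prob_space M2 .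
  have ne: "{1..k} \<noteq> {}" "finite {1..k}" using k2 by auto
  have Ssets: "S \<in> sets (measure_pmf (pmf_of_set {1..k}) \<Otimes>\<^sub>M M2)"
  proof -
    have "S = (\<Union>i\<in>{1..k}. (UNIV - {i}) \<times> U i)" unfolding S_def by auto
    moreover have "(UNIV - {i}) \<times> U i \<in> sets (measure_pmf (pmf_of_set {1..k}) \<Otimes>\<^sub>M M2)" for i
      using Ub unfolding M2_def by (intro pair_measureI) auto
    ultimately show ?thesis by auto
  qed
  have slice: "emeasure M2 (Pair l -` S) = ennreal (2 * measure lborel (A l))" for l
  proof -
    have PS: "Pair l -` S = (\<Union>i\<in>{1..k}-{l}. U i)" unfolding S_def by auto
    have e: "{0<..<1/2} \<inter> Pair l -` S = A l" unfolding PS A_def by auto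
    have PSb: "Pair l -` S \<in> sets borel" unfolding PS using Ub by auto
    have "emeasure lborel (A l) \<le> emeasure lborel {0<..<1/2::real}"
      by (rule emeasure_mono) (auto simp: A_def)
    then have fin: "emeasure lborel (A l) \<noteq> \<infinity>" by (auto simp: top_unique)
    have "emeasure M2 (Pair l -` S) = emeasure lborel (A l) / ennreal (1/2)"
      unfolding M2_def using PSb by (subst emeasure_uniform_measure) (simp_all only: e sets_lborel, auto)
    also have "\<dots> = ennreal (measure lborel (A l)) / ennreal (1/2)"
      using fin by (simp add: emeasure_eq_ennreal_measure)
    also have "\<dots> = ennreal (2 * measure lborel (A l))"
      by (subst divide_ennreal) (auto simp: measure_nonneg)
    finally show ?thesis .
  qed
  define R where "R = (\<Sum>l\<in>{1..k}. 2 * measure lborel (A l)) / real k"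
  have "emeasure (measure_pmf (pmf_of_set {1..k}) \<Otimes>\<^sub>M M2) S
        = (\<integral>\<^sup>+l. emeasure M2 (Pair l -` S) \<partial>measure_pmf (pmf_of_set {1..k}))"
    by (rule M2.emeasure_pair_measure_alt[OF Ssets])
  also have "\<dots> = (\<Sum>l\<in>{1..k}. emeasure M2 (Pair l -` S)) / card {1..k}"
    using ne by (rule nn_integral_pmf_of_set)
  also have "\<dots> = ennreal R"
    unfolding slice R_def
    using k2 by (simp add: sum_ennreal ennreal_of_nat_eq_real_of_nat sum_nonneg measure_nonneg)
      (subst divide_ennreal, auto intro!: sum_nonneg simp: measure_nonneg)
  finally have em: "emeasure (measure_pmf (pmf_of_set {1..k}) \<Otimes>\<^sub>M M2) S = ennreal R" .
  have R0: "R \<ge> 0" unfolding R_def by (auto intro!: sum_nonneg divide_nonneg_nonneg)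
  have "measure (measure_pmf (pmf_of_set {1..k}) \<Otimes>\<^sub>M M2) S = R"
    using em R0 by (simp add: measure_def)
  also have "R \<le> 2 * (1 - 1 / real k) * x"
  proof -
    have c: "(\<Sum>l\<in>{1..k}. measure lborel (A l)) \<le> (real k - 1) * x"
      unfolding A_def by (rule comb_part[OF k2 Ub x0]) (fact assms(4), fact assms(5))
    have "R = 2 * (\<Sum>l\<in>{1..k}. measure lborel (A l)) / real k"
      unfolding R_def by (simp add: sum_distrib_left)
    also have "\<dots> \<le> 2 * ((real k - 1) * x) / real k"
      using c k2 by (intro divide_right_mono) auto
    also have "\<dots> = 2 * (1 - 1 / real k) * x"
      using k2 by (simp add: field_simps)
    finally show ?thesis .
  qed
  finally show ?thesis unfolding S_def M2_def .
qed



lemma is_path_succ: "is_path V E p a b \<longleftrightarrow> p \<noteq> [] \<and> hd p = a \<and> last p = b \<and> set p \<subseteq> V \<and> distinct p \<and> successively E p"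
  unfolding is_path_def successively_conv_nth by blast

lemma finite_paths: "finite V \<Longrightarrow> finite {p. is_path V E p a b}"
proof -
  assume fV: "finite V"
  have "{p. is_path V E p a b} \<subseteq> {p. set p \<subseteq> V \<and> length p \<le> card V}"
  proof
    fix p assume "p \<in> {p. is_path V E p a b}"
    then have h: "set p \<subseteq> V" "distinct p" unfolding is_path_def by auto
    then have "card (set p) \<le> card V" using fV by (intro card_mono)
    then show "p \<in> {p. set p \<subseteq> V \<and> length p \<le> card V}" using h distinct_card[OF h(2)] by auto
  qed
  then show ?thesis using finite_lists_length_le[OF fV] by (rule finite_subset)
qed

lemma dist_attained:
  assumes "finite V" "node_dist V E x a b \<le> ereal t"
  shows "\<exists>p. is_path V E p a b \<and> path_len x p \<le> t"
proof -
  define S where "S = (\<lambda>p. ereal (path_len x p)) ` {p. is_path V E p a b}"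
  have eq: "{ereal (path_len x p) | p. is_path V E p a b} = S" unfolding S_def by auto
  have fS: "finite S" unfolding S_def using finite_paths[OF assms(1)] by auto
  have "S \<noteq> {}"
  proof
    assume "S = {}"
    then have "node_dist V E x a b = \<infinity>" unfolding node_dist_def eq by (simp add: top_ereal_def)
    then show False using assms(2) by simp
  qed
  then have "Inf S \<in> S" using fS Min_in Min_Inf by metis
  then obtain p where "is_path V E p a b" "ereal (path_len x p) = Inf S" unfolding S_def by auto
  moreover have "Inf S \<le> ereal t" using assms(2) unfolding node_dist_def eq .
  ultimately show ?thesis by (metis ereal_less_eq(3))
qed

lemma dist_lower: "is_path V E p a b \<Longrightarrow> node_dist V E x a b \<le> ereal (path_len x p)"
  unfolding node_dist_def by (rule Inf_lower) auto

lemma walk_to_path: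
  assumes "p \<noteq> []" "set p \<subseteq> V" "successively E p" "\<And>u. u \<in> V \<Longrightarrow> x u \<ge> 0"
  shows "\<exists>q. is_path V E q (hd p) (last p) \<and> path_len x q \<le> path_len x p"
  using assms(1-3)
proof (induction "length p" arbitrary: p rule: less_induct)
  case less
  show ?case
  proof (cases "distinct p")
    case True
    then show ?thesis using less.prems unfolding is_path_succ by auto
  next
    case False
    then obtain xs y ys zs where p: "p = xs @ [y] @ ys @ [y] @ zs" using not_distinct_decomp by blast
    define q where "q = xs @ [y] @ zs"
    have lq: "length q < length p" unfolding p q_def by simp
    have sq: "set q \<subseteq> V" using less.prems unfolding p q_def by auto
    have "successively E ((xs @ [y] @ ys) @ ([y] @ zs))" using less.prems(3) p by simp
    note s0 = successively_append_iff[THEN iffD1, OF this]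
    have "successively E ((xs @ [y]) @ ys)" using s0 by simp
    note s1 = successively_append_iff[THEN iffD1, OF this] s0
    have sc: "successively E q" using s1 unfolding q_def
      by (auto simp: successively_append_iff successively_Cons)
    obtain r where r: "is_path V E r (hd q) (last q)" "path_len x r \<le> path_len x q"
      using less.hyps[OF lq _ sq sc] unfolding q_def by auto
    have "hd q = hd p" "last q = last p" unfolding p q_def by (cases xs; simp)+
    moreover have "path_len x q \<le> path_len x p"
    proof -
      have "0 \<le> x y" using less.prems(2) assms(4) unfolding p by auto
      moreover have "0 \<le> sum_list (map x ys)" using less.prems(2) assms(4) unfolding p
        by (intro sum_list_nonneg) auto
      ultimately show ?thesis unfolding p q_def path_len_def by simp
    qed
    ultimately show ?thesis using r by auto
  qed
qed



lemma bdry_info: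
  assumes "finite V" "v \<in> ball_bdry V E x a t"
  shows "\<exists>p u. is_path V E p a u \<and> path_len x p \<le> t \<and> E u v" "v \<in> V"
    "\<not> node_dist V E x a v \<le> ereal t"
proof -
  obtain u where u: "u \<in> V" "node_dist V E x a u \<le> ereal t" "E u v"
    using assms(2) unfolding ball_bdry_def ball_nd_def by auto
  then show "\<exists>p u. is_path V E p a u \<and> path_len x p \<le> t \<and> E u v"
    using dist_attained[OF assms(1) u(2)] by blast
  show "v \<in> V" "\<not> node_dist V E x a v \<le> ereal t"
    using assms(2) unfolding ball_bdry_def ball_nd_def by auto
qed

lemma join_paths:
  assumes sym: "\<And>a b. E a b \<Longrightarrow> E b a"
    and nn: "\<And>u. u \<in> V \<Longrightarrow> x u \<ge> 0" and vV: "v \<in> V"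
    and p: "is_path V E p a u" "E u v" and q: "is_path V E q b u'" "E u' v"
  shows "\<exists>r. is_path V E r a b \<and> path_len x r \<le> path_len x p + x v + path_len x q"
proof -
  have pp: "p \<noteq> []" "hd p = a" "last p = u" "set p \<subseteq> V" "successively E p"
    using p(1) unfolding is_path_succ by auto
  have qq: "q \<noteq> []" "hd q = b" "last q = u'" "set q \<subseteq> V" "successively E q"
    using q(1) unfolding is_path_succ by auto
  have rq: "successively E (rev q)"
    unfolding successively_rev by (rule successively_mono[OF qq(5)]) (use sym in auto)
  define w where "w = p @ [v] @ rev q"
  have vq: "successively E ([v] @ rev q)"
    by (subst successively_append_iff) (use qq rq q(2) sym in \<open>auto simp: hd_rev\<close>)
  have "w \<noteq> []" "set w \<subseteq> V" unfolding w_def using pp qq vV by auto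
  moreover have "successively E w" unfolding w_def
    by (subst successively_append_iff) (use pp vq p(2) in auto)
  ultimately obtain r where r: "is_path V E r (hd w) (last w)" "path_len x r \<le> path_len x w"
    using walk_to_path[of w V E x] nn by blast
  have "hd w = a" "last w = b" unfolding w_def using pp qq by (auto simp: last_rev)
  moreover have "path_len x w = path_len x p + x v + path_len x q"
    unfolding w_def path_len_def by (simp add: rev_map[symmetric])
  ultimately show ?thesis using r by auto
qed

theorem mainTheorem10:
  fixes V :: "'a set" and E :: "'a \<Rightarrow> 'a \<Rightarrow> bool" and k :: nat and s :: "nat \<Rightarrow> 'a"
    and w x :: "'a \<Rightarrow> real" and v :: 'a
  assumes "finite V"
    and "\<And>a b. E a b \<Longrightarrow> a \<in> V \<and> b \<in> V"
    and "\<And>a b. E a b \<Longrightarrow> E b a"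
    and "\<And>a. \<not> E a a"
    and "\<And>a. a \<in> V \<Longrightarrow> w a \<ge> 0"
    and "k \<ge> 2"
    and "s ` {1..k} \<subseteq> V"
    and "inj_on s {1..k}"
    and "\<And>i j. i \<in> {1..k} \<Longrightarrow> j \<in> {1..k} \<Longrightarrow> \<not> E (s i) (s j)"
    and "node_mc_feasible V E k s x"
    and "v \<in> V"
  shows "measure (measure_pmf (pmf_of_set {1..k}) \<Otimes>\<^sub>M uniform_measure lborel {0<..<1/2})
           {(l, \<theta>). v \<in> cut_set V E k s x l \<theta>}
         \<le> 2 * (1 - 1 / real k) * x v"
proof -
  note fV = assms(1) and sym = assms(3) and k2 = assms(6) and feas = assms(10) and vV = assms(11)
  have nn: "\<And>u. u \<in> V \<Longrightarrow> x u \<ge> 0" using feas unfolding node_mc_feasible_def by auto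
  have X0: "x v \<ge> 0" using nn vV by auto
  define U where "U i = {t. v \<in> ball_bdry V E x (s i) t}" for i
  have seteq: "{(l, \<theta>). v \<in> cut_set V E k s x l \<theta>} = {(l, t). \<exists>i\<in>{1..k}-{l}. t \<in> U i}"
    unfolding cut_set_def U_def by auto
  have Ub: "U i \<in> sets borel" for i
  proof -
    have cl: "{t::real. c \<le> ereal t} \<in> sets borel" for c
      by (intro borel_closed closed_Collect_le continuous_intros)
    have "U i = (if v \<in> V then (- {t. node_dist V E x (s i) v \<le> ereal t}) \<inter>
                 (\<Union>u\<in>{u\<in>V. E u v}. {t. node_dist V E x (s i) u \<le> ereal t}) else {})"
      unfolding U_def ball_bdry_def ball_nd_def by auto
    moreover have "finite {u\<in>V. E u v}" using fV by auto
    ultimately show ?thesis using cl by auto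
  qed
  have PA: "t' < t + x v" if H: "i \<in> {1..k}" "t \<in> U i \<inter> {0<..<1/2}" "t' \<in> U i \<inter> {0<..<1/2}" for i t t'
  proof -
    obtain p u where p: "is_path V E p (s i) u" "path_len x p \<le> t" "E u v"
      using bdry_info(1)[OF fV, of v E x "s i" t] H(2) unfolding U_def by auto
    obtain r where r: "is_path V E r (s i) v" "path_len x r \<le> path_len x p + x v"
    proof -
      have pp: "p \<noteq> []" "hd p = s i" "last p = u" "set p \<subseteq> V" "successively E p"
        using p(1) unfolding is_path_succ by auto
      have "successively E (p @ [v])" using pp p(3) by (auto simp: successively_append_iff)
      then obtain r where "is_path V E r (hd (p @ [v])) (last (p @ [v]))" "path_len x r \<le> path_len x (p @ [v])"
        using walk_to_path[of "p @ [v]" V E x] pp vV nn by auto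
      then show ?thesis using that pp by (auto simp: path_len_def)
    qed
    have "\<not> node_dist V E x (s i) v \<le> ereal t'"
      using bdry_info(3)[OF fV, of v E x "s i" t'] H(3) unfolding U_def by auto
    moreover have "node_dist V E x (s i) v \<le> ereal (path_len x r)" by (rule dist_lower[OF r(1)])
    ultimately have "t' < path_len x r" by (metis ereal_less_eq(3) linorder_not_le order_trans)
    then show ?thesis using r(2) p(2) by linarith
  qed
  have PB: "1 \<le> t + t' + x v" if H: "i \<in> {1..k}" "j \<in> {1..k}" "i < j" "t \<in> U i" "t' \<in> U j" for i j t t'
  proof -
    obtain p u where p: "is_path V E p (s i) u" "path_len x p \<le> t" "E u v"
      using bdry_info(1)[OF fV, of v E x "s i" t] H(4) unfolding U_def by auto
    obtain q u' where q: "is_path V E q (s j) u'" "path_len x q \<le> t'" "E u' v"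
      using bdry_info(1)[OF fV, of v E x "s j" t'] H(5) unfolding U_def by auto
    obtain r where r: "is_path V E r (s i) (s j)" "path_len x r \<le> path_len x p + x v + path_len x q"
      using join_paths[where E=E and V=V and x=x and v=v and p=p and q=q] sym nn vV p(1,3) q(1,3) by blast
    have "1 \<le> path_len x r" using feas H r(1) unfolding node_mc_feasible_def by blast
    then show ?thesis using r(2) p(2) q(2) by linarith
  qed
  have PC: "1 \<le> t + t' + x v" if "i \<in> {1..k}" "j \<in> {1..k}" "i \<noteq> j" "t \<in> U i \<inter> {0<..<1/2}"
    "t' \<in> U j \<inter> {0<..<1/2}" for i j t t'
  proof (cases "i < j")
    case True then show ?thesis using PB that by auto
  next
    case False then have "j < i" using that(3) by auto
    then show ?thesis using PB[of j i t' t] that by auto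
  qed
  show ?thesis unfolding seteq
    by (rule prob_part[OF k2 Ub X0]) (fact PA, fact PC)
qed

end
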